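(* Let $G$ be a second-countable ample Hausdorff groupoid, let $R$ be a commutative unital ring with the discrete topology, let $T \le R^\times$, and let $(\Sigma, i, q)$ be a discrete twist by $T$ over $G$. Then $\Sigma$ is topologically trivial, i.e. there is a continuous map $P\colon G \to \Sigma$ with $q \circ P = \mathrm{id}_G$ and $P(G^{(0)}) \subseteq \Sigma^{(0)}$.
   Context: Groupoids are locally compact Hausdorff topological groupoids; $G$ is ample if it has a basis of compact open bisections (a bisection is a set contained in an open set on which $r$ and $s$ restrict to homeomorphisms onto open sets). A discrete twist by $T$ over $G$ is a sequence $G^{(0)} \times T \xrightarrow{i} \Sigma \xrightarrow{q} G$, where $T$ carries the discrete topology, $G^{(0)} \times T$ is the trivial group bundle with fibres $T$, $\Sigma$ is a Hausdorff groupoid with $\Sigma^{(0)} = i(G^{(0)} \times \{1\})$, and $i, q$ are continuous groupoid homomorphisms restricting to homeomorphisms of unit spaces, such that: (1) $i(\{x\} \times T) = q^{-1}(x)$ for all $x \in G^{(0)}$, $i$ is injective, and $q$ is a quotient map; (2) for each $\alpha \in G$ there are an open bisection $B_\alpha \ni \alpha$ of $G$ and a continuous $P_\alpha\colon B_\alpha \to \Sigma$ with $q \circ P_\alpha = \mathrm{id}_{B_\alpha}$ such that $(\beta,z) \mapsto i(r(\beta),z)P_\alpha(\beta)$ is a homeomorphism $B_\alpha \times T \to q^{-1}(B_\alpha)$; (3) $i(r(\varepsilon),z)\varepsilon = \varepsilon\, i(s(\varepsilon),z)$ for all $\varepsilon \in \Sigma$, $z \in T$. *)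

theory Defs
  imports "HOL-Analysis.Analysis"
begin

text \<open>A groupoid is given by its space of arrows (the topspace of gtop), range, source,
  partially defined multiplication (meaningful on composable pairs) and inversion.\<close>

record 'a groupoid =
  gtop :: "'a topology"
  grng :: "'a \<Rightarrow> 'a"
  gsrc :: "'a \<Rightarrow> 'a"
  gmul :: "'a \<Rightarrow> 'a \<Rightarrow> 'a"
  ginv :: "'a \<Rightarrow> 'a"

definition arrows :: "('a, 'b) groupoid_scheme \<Rightarrow> 'a set" where
  "arrows G = topspace (gtop G)"

definition units :: "('a, 'b) groupoid_scheme \<Rightarrow> 'a set" where
  "units G = grng G ` arrows G"

definition composable :: "('a, 'b) groupoid_scheme \<Rightarrow> ('a \<times> 'a) set" where
  "composable G = {(a, b). a \<in> arrows G \<and> b \<in> arrows G \<and> gsrc G a = grng G b}"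

definition is_groupoid :: "('a, 'b) groupoid_scheme \<Rightarrow> bool" where
  "is_groupoid G \<longleftrightarrow>
     (\<forall>a \<in> arrows G. grng G a \<in> arrows G \<and> gsrc G a \<in> arrows G \<and> ginv G a \<in> arrows G) \<and>
     (\<forall>a \<in> arrows G. grng G (grng G a) = grng G a \<and> gsrc G (grng G a) = grng G a) \<and>
     (\<forall>(a, b) \<in> composable G. gmul G a b \<in> arrows G \<and>
        grng G (gmul G a b) = grng G a \<and> gsrc G (gmul G a b) = gsrc G b) \<and>
     (\<forall>a b c. (a, b) \<in> composable G \<and> (b, c) \<in> composable G \<longrightarrow>
        gmul G (gmul G a b) c = gmul G a (gmul G b c)) \<and>
     (\<forall>a \<in> arrows G. gmul G (grng G a) a = a \<and> gmul G a (gsrc G a) = a) \<and>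
     (\<forall>a \<in> arrows G. grng G (ginv G a) = gsrc G a \<and> gsrc G (ginv G a) = grng G a \<and>
        gmul G a (ginv G a) = grng G a \<and> gmul G (ginv G a) a = gsrc G a)"

definition topological_groupoid :: "('a, 'b) groupoid_scheme \<Rightarrow> bool" where
  "topological_groupoid G \<longleftrightarrow> is_groupoid G \<and>
     continuous_map (subtopology (prod_topology (gtop G) (gtop G)) (composable G)) (gtop G)
        (\<lambda>(a, b). gmul G a b) \<and>
     continuous_map (gtop G) (gtop G) (ginv G) \<and>
     continuous_map (gtop G) (gtop G) (grng G) \<and>
     continuous_map (gtop G) (gtop G) (gsrc G)"

definition lcH_groupoid :: "('a, 'b) groupoid_scheme \<Rightarrow> bool" where
  "lcH_groupoid G \<longleftrightarrow> topological_groupoid G \<and> Hausdorff_space (gtop G) \<and>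
     locally_compact_space (gtop G)"

definition unit_top :: "('a, 'b) groupoid_scheme \<Rightarrow> 'a topology" where
  "unit_top G = subtopology (gtop G) (units G)"

definition bisection :: "('a, 'b) groupoid_scheme \<Rightarrow> 'a set \<Rightarrow> bool" where
  "bisection G B \<longleftrightarrow> (\<exists>U. openin (gtop G) U \<and> B \<subseteq> U \<and>
     openin (unit_top G) (grng G ` U) \<and> openin (unit_top G) (gsrc G ` U) \<and>
     homeomorphic_map (subtopology (gtop G) U) (subtopology (gtop G) (grng G ` U)) (grng G) \<and>
     homeomorphic_map (subtopology (gtop G) U) (subtopology (gtop G) (gsrc G ` U)) (gsrc G))"

definition open_bisection :: "('a, 'b) groupoid_scheme \<Rightarrow> 'a set \<Rightarrow> bool" where
  "open_bisection G B \<longleftrightarrow> openin (gtop G) B \<and> bisection G B"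

definition ample :: "('a, 'b) groupoid_scheme \<Rightarrow> bool" where
  "ample G \<longleftrightarrow> (\<forall>U x. openin (gtop G) U \<and> x \<in> U \<longrightarrow>
     (\<exists>B. compactin (gtop G) B \<and> open_bisection G B \<and> x \<in> B \<and> B \<subseteq> U))"

definition groupoid_hom ::
  "('a, 'b) groupoid_scheme \<Rightarrow> ('c, 'd) groupoid_scheme \<Rightarrow> ('a \<Rightarrow> 'c) \<Rightarrow> bool" where
  "groupoid_hom G H f \<longleftrightarrow> (\<forall>a \<in> arrows G. f a \<in> arrows H) \<and>
     (\<forall>(a, b) \<in> composable G. f (gmul G a b) = gmul H (f a) (f b))"

definition trivial_bundle :: "('a, 'b) groupoid_scheme \<Rightarrow> 'r::comm_ring_1 set \<Rightarrow> ('a \<times> 'r) groupoid" where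
  "trivial_bundle G T =
     \<lparr> gtop = prod_topology (unit_top G) (discrete_topology T),
       grng = (\<lambda>(x, z). (x, 1)),
       gsrc = (\<lambda>(x, z). (x, 1)),
       gmul = (\<lambda>(x, z) (y, w). (x, z * w)),
       ginv = (\<lambda>(x, z). (x, SOME w. w \<in> T \<and> z * w = 1)) \<rparr>"

definition discrete_twist ::
  "('a, 'b) groupoid_scheme \<Rightarrow> 'r::comm_ring_1 set \<Rightarrow> ('s, 'c) groupoid_scheme \<Rightarrow>
   ('a \<times> 'r \<Rightarrow> 's) \<Rightarrow> ('s \<Rightarrow> 'a) \<Rightarrow> bool" where
  "discrete_twist G T \<Sigma> i q \<longleftrightarrow>
     lcH_groupoid \<Sigma> \<and>
     units \<Sigma> = i ` (units G \<times> {1}) \<and>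
     \<comment> \<open>i and q are continuous groupoid homomorphisms\<close>
     groupoid_hom (trivial_bundle G T) \<Sigma> i \<and>
     continuous_map (prod_topology (unit_top G) (discrete_topology T)) (gtop \<Sigma>) i \<and>
     groupoid_hom \<Sigma> G q \<and>
     continuous_map (gtop \<Sigma>) (gtop G) q \<and>
     \<comment> \<open>restricting to homeomorphisms of unit spaces\<close>
     homeomorphic_map (unit_top G) (unit_top \<Sigma>) (\<lambda>x. i (x, 1)) \<and>
     homeomorphic_map (unit_top \<Sigma>) (unit_top G) q \<and>
     \<comment> \<open>(1)\<close>
     (\<forall>x \<in> units G. i ` ({x} \<times> T) = {e \<in> arrows \<Sigma>. q e = x}) \<and>
     inj_on i (units G \<times> T) \<and>
     quotient_map (gtop \<Sigma>) (gtop G) q \<and>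
     \<comment> \<open>(2) local triviality\<close>
     (\<forall>\<alpha> \<in> arrows G. \<exists>B P. open_bisection G B \<and> \<alpha> \<in> B \<and>
        continuous_map (subtopology (gtop G) B) (gtop \<Sigma>) P \<and>
        (\<forall>\<beta> \<in> B. q (P \<beta>) = \<beta>) \<and>
        homeomorphic_map (prod_topology (subtopology (gtop G) B) (discrete_topology T))
          (subtopology (gtop \<Sigma>) {e \<in> arrows \<Sigma>. q e \<in> B})
          (\<lambda>(\<beta>, z). gmul \<Sigma> (i (grng G \<beta>, z)) (P \<beta>))) \<and>
     \<comment> \<open>(3) centrality; r(e), s(e) in G0 identified via q\<close>
     (\<forall>e \<in> arrows \<Sigma>. \<forall>z \<in> T.
        gmul \<Sigma> (i (q (grng \<Sigma> e), z)) e = gmul \<Sigma> e (i (q (gsrc \<Sigma> e), z)))"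

end

theory Submission
  imports Defs
begin

lemma units_open:
  assumes "lcH_groupoid G" "ample G"
  shows "openin (gtop G) (units G)"
proof -
  have gr: "is_groupoid G" using assms(1) by (simp add: lcH_groupoid_def topological_groupoid_def)
  have rc: "continuous_map (gtop G) (gtop G) (grng G)"
    using assms(1) by (simp add: lcH_groupoid_def topological_groupoid_def)
  have ua: "units G \<subseteq> arrows G" using gr by (auto simp: units_def is_groupoid_def)
  show ?thesis
  proof (subst openin_subopen, intro ballI)
    fix x assume x: "x \<in> units G"
    then obtain y where y: "y \<in> arrows G" "x = grng G y" by (auto simp: units_def)
    have xa: "x \<in> arrows G" using x ua by auto
    have rx: "grng G x = x" using gr y by (auto simp: is_groupoid_def)
    obtain B where B: "compactin (gtop G) B" "open_bisection G B" "x \<in> B"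
      using assms(2) xa unfolding ample_def arrows_def by (meson openin_topspace)
    then obtain U where U: "openin (gtop G) U" "B \<subseteq> U"
      "homeomorphic_map (subtopology (gtop G) U) (subtopology (gtop G) (grng G ` U)) (grng G)"
      by (auto simp: open_bisection_def bisection_def)
    have inj: "inj_on (grng G) U"
      using U(3) openin_subset[OF U(1)] by (auto simp: homeomorphic_eq_everything_map Int_absorb1)
    define W where "W = {a \<in> topspace (gtop G). grng G a \<in> B}"
    have "openin (gtop G) B" using B by (simp add: open_bisection_def)
    hence Wo: "openin (gtop G) W" unfolding W_def using rc openin_continuous_map_preimage by blast
    have "W \<inter> B \<subseteq> units G"
    proof
      fix a assume a: "a \<in> W \<inter> B"
      hence aa: "a \<in> arrows G" by (auto simp: W_def arrows_def)
      have "grng G (grng G a) = grng G a" using gr aa by (auto simp: is_groupoid_def)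
      moreover have "grng G a \<in> U" "a \<in> U" using a U(2) by (auto simp: W_def)
      ultimately have "grng G a = a" using inj by (auto simp: inj_on_def)
      thus "a \<in> units G" using aa unfolding units_def by (metis image_eqI)
    qed
    moreover have "x \<in> W \<inter> B" using B(3) xa rx by (auto simp: W_def arrows_def)
    moreover have "openin (gtop G) (W \<inter> B)" using Wo \<open>openin (gtop G) B\<close> by auto
    ultimately show "\<exists>T. openin (gtop G) T \<and> x \<in> T \<and> T \<subseteq> units G" by blast
  qed
qed

theorem theorem4p10:
  fixes G :: "('a, 'b) groupoid_scheme"
    and \<Sigma> :: "('s, 'c) groupoid_scheme"
    and T :: "'r::comm_ring_1 set"
    and i :: "'a \<times> 'r \<Rightarrow> 's"
    and q :: "'s \<Rightarrow> 'a"
  assumes "lcH_groupoid G"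
    and "second_countable (gtop G)"
    and "ample G"
    and "1 \<in> T"
    and "\<forall>z \<in> T. \<forall>w \<in> T. z * w \<in> T"
    and "\<forall>z \<in> T. \<exists>w \<in> T. z * w = 1"
    and "discrete_twist G T \<Sigma> i q"
  shows "\<exists>P. continuous_map (gtop G) (gtop \<Sigma>) P \<and>
             (\<forall>\<alpha> \<in> arrows G. q (P \<alpha>) = \<alpha>) \<and>
             P ` units G \<subseteq> units \<Sigma>"
proof -
  define X where "X = gtop G"
  have haus: "Hausdorff_space X" using assms(1) by (simp add: lcH_groupoid_def X_def)
  have gr: "is_groupoid G" using assms(1) by (simp add: lcH_groupoid_def topological_groupoid_def)
  have ua: "units G \<subseteq> arrows G" using gr by (auto simp: units_def is_groupoid_def)
  have uo: "openin X (units G)" using units_open[OF assms(1,3)] by (simp add: X_def)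
  have tw: "units \<Sigma> = i ` (units G \<times> {1})"
    "homeomorphic_map (unit_top G) (unit_top \<Sigma>) (\<lambda>x. i (x, 1))"
    "\<forall>x \<in> units G. i ` ({x} \<times> T) = {e \<in> arrows \<Sigma>. q e = x}"
    "\<forall>\<alpha> \<in> arrows G. \<exists>B P. open_bisection G B \<and> \<alpha> \<in> B \<and>
        continuous_map (subtopology (gtop G) B) (gtop \<Sigma>) P \<and>
        (\<forall>\<beta> \<in> B. q (P \<beta>) = \<beta>)"
    using assms(7) unfolding discrete_twist_def by blast+
  define f0 where "f0 = (\<lambda>x. i (x, (1::'r)))"
  have f0c: "continuous_map (subtopology X (units G)) (gtop \<Sigma>) f0"
    using tw(2) unfolding f0_def unit_top_def X_def
    by (meson continuous_map_into_fulltopology homeomorphic_imp_continuous_map)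
  have f0q: "q (f0 x) = x" if "x \<in> units G" for x
  proof -
    have "f0 x \<in> i ` ({x} \<times> T)" using assms(4) by (auto simp: f0_def)
    thus ?thesis using tw(3) that by auto
  qed
  have f0u: "f0 x \<in> units \<Sigma>" if "x \<in> units G" for x
    using that tw(1) by (auto simp: f0_def)
  define \<U> where "\<U> = {K. compactin X K \<and> openin X K \<and> (\<exists>S. continuous_map (subtopology X K) (gtop \<Sigma>) S \<and> (\<forall>\<beta>\<in>K. q (S \<beta>) = \<beta>))}"
  have cover: "topspace X \<subseteq> \<Union>\<U>"
  proof
    fix \<alpha> assume a: "\<alpha> \<in> topspace X"
    then obtain B P where BP: "open_bisection G B" "\<alpha> \<in> B"
        "continuous_map (subtopology X B) (gtop \<Sigma>) P" "\<forall>\<beta> \<in> B. q (P \<beta>) = \<beta>"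
      using tw(4) by (auto simp: X_def arrows_def)
    obtain C where C: "compactin X C" "open_bisection G C" "\<alpha> \<in> C" "C \<subseteq> B"
      using assms(3) BP(1,2) unfolding ample_def open_bisection_def X_def by blast
    have Pc: "continuous_map (subtopology X C) (gtop \<Sigma>) P"
      using BP(3) C(4) by (rule continuous_map_from_subtopology_mono)
    have "openin X C" using C(2) by (simp add: open_bisection_def X_def)
    hence "C \<in> \<U>" unfolding \<U>_def using C(1) BP(4) C(4) Pc by blast
    thus "\<alpha> \<in> \<Union>\<U>" using C by auto
  qed
  have L: "Lindelof_space X" unfolding X_def by (rule second_countable_imp_Lindelof_space[OF assms(2)])
  have op: "\<forall>U \<in> \<U>. openin X U" by (simp add: \<U>_def)
  obtain \<V> where V: "countable \<V>" "\<V> \<subseteq> \<U>" "topspace X \<subseteq> \<Union>\<V>"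
    using L[unfolded Lindelof_space_alt, rule_format, OF conjI[OF op cover]] by (elim exE conjE)
  show ?thesis
  proof (cases "topspace X = {}")
    case True
    have "arrows G = {}" using True by (simp add: X_def arrows_def)
    hence "units G = {}" by (simp add: units_def)
    moreover have "continuous_map (gtop G) (gtop \<Sigma>) f0" using True by (simp add: X_def continuous_map_on_empty)
    ultimately show ?thesis using \<open>arrows G = {}\<close> by (intro exI[of _ f0]) simp
  next
    case False
    hence Vne: "\<V> \<noteq> {}" using V(3) by auto
    define K where "K = from_nat_into \<V>"
    have KU: "K n \<in> \<U>" for n using V(2) from_nat_into[OF Vne, of n] unfolding K_def by blast
    have "\<forall>n. \<exists>S. continuous_map (subtopology X (K n)) (gtop \<Sigma>) S \<and> (\<forall>\<beta>\<in>K n. q (S \<beta>) = \<beta>)"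
      using KU unfolding \<U>_def by blast
    then obtain Sec where Sec: "\<And>n. continuous_map (subtopology X (K n)) (gtop \<Sigma>) (Sec n) \<and> (\<forall>\<beta>\<in>K n. q (Sec n \<beta>) = \<beta>)"
      by metis
    have Kc: "closedin X (K n)" for n using KU[of n] haus compactin_imp_closedin by (auto simp: \<U>_def)
    have Ko: "openin X (K n)" for n using KU[of n] by (auto simp: \<U>_def)
    define D where "D n = K n - \<Union>(K ` {..<n})" for n
    have Do: "openin X (D n)" for n
      unfolding D_def using Ko Kc by (intro openin_diff closedin_Union) auto
    have Dd: "x \<in> D n \<Longrightarrow> x \<in> D m \<Longrightarrow> n = m" for x n m
      unfolding D_def by (metis (no_types, lifting) DiffE UN_I lessThan_iff nat_neq_iff)
    have covK: "\<exists>n. x \<in> K n" if xt: "x \<in> topspace X" for x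
    proof -
      obtain V' where "V' \<in> \<V>" "x \<in> V'" using V(3) xt by auto
      thus ?thesis using from_nat_into_surj[OF V(1)] unfolding K_def by metis
    qed
    define idx where "idx x = (LEAST n. x \<in> K n)" for x
    have idxD: "x \<in> D (idx x)" if xt: "x \<in> topspace X" for x
    proof -
      obtain n where "x \<in> K n" using covK xt by blast
      hence "x \<in> K (idx x)" "\<And>m. m < idx x \<Longrightarrow> x \<notin> K m"
        unfolding idx_def by (auto intro: LeastI dest: not_less_Least)
      thus ?thesis unfolding D_def by auto
    qed
    have DK: "D n \<subseteq> K n" for n by (auto simp: D_def)
    define P where "P x = (if x \<in> units G then f0 x else Sec (idx x) x)" for x
    define Tp where "Tp j = (case j of None \<Rightarrow> units G | Some n \<Rightarrow> D n - units G)" for j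
    define fp where "fp j = (case j of None \<Rightarrow> f0 | Some n \<Rightarrow> Sec n)" for j
    have "continuous_map X (gtop \<Sigma>) P"
    proof (rule pasting_lemma[where I=UNIV and T=Tp and f=fp])
      fix j :: "nat option"
      show "openin X (Tp j)"
      proof (cases j)
        case None thus ?thesis using uo by (simp add: Tp_def)
      next
        case (Some n)
        have "closedin X (units G)"
        proof -
          have "units G = {x \<in> topspace X. grng G x = x}"
          proof
            show "units G \<subseteq> {x \<in> topspace X. grng G x = x}"
              using gr by (auto simp: units_def is_groupoid_def X_def arrows_def)
            show "{x \<in> topspace X. grng G x = x} \<subseteq> units G"
            proof
              fix x assume "x \<in> {x \<in> topspace X. grng G x = x}"
              hence "x \<in> arrows G" "grng G x = x" by (auto simp: X_def arrows_def)
              thus "x \<in> units G" unfolding units_def by (metis image_eqI)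
            qed
          qed
          moreover have "continuous_map X X (grng G)"
            using assms(1) by (simp add: lcH_groupoid_def topological_groupoid_def X_def)
          moreover have "closedin X {x \<in> topspace X. grng G x = id x}"
            using closedin_continuous_maps_eq[OF haus \<open>continuous_map X X (grng G)\<close> continuous_map_id] .
          ultimately show ?thesis by simp
        qed
        thus ?thesis using Some Do by (simp add: Tp_def openin_diff)
      qed
      show "continuous_map (subtopology X (Tp j)) (gtop \<Sigma>) (fp j)"
      proof (cases j)
        case None thus ?thesis using f0c by (simp add: Tp_def fp_def)
      next
        case (Some n)
        thus ?thesis using Sec[of n] DK[of n] unfolding Tp_def fp_def
          by (auto intro: continuous_map_from_subtopology_mono)
      qed
    next
      fix j k x assume "x \<in> topspace X \<inter> Tp j \<inter> Tp k"
      thus "fp j x = fp k x" using Dd by (cases j; cases k) (auto simp: Tp_def fp_def)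
    next
      fix x assume x: "x \<in> topspace X"
      show "\<exists>j. j \<in> UNIV \<and> x \<in> Tp j \<and> P x = fp j x"
      proof (cases "x \<in> units G")
        case True thus ?thesis by (intro exI[of _ None]) (auto simp: Tp_def fp_def P_def)
      next
        case False thus ?thesis using idxD[OF x]
          by (intro exI[of _ "Some (idx x)"]) (auto simp: Tp_def fp_def P_def)
      qed
    qed
    moreover have "\<forall>\<alpha> \<in> arrows G. q (P \<alpha>) = \<alpha>"
    proof
      fix a assume a: "a \<in> arrows G"
      show "q (P a) = a"
      proof (cases "a \<in> units G")
        case True thus ?thesis using f0q by (simp add: P_def)
      next
        case False
        have "a \<in> K (idx a)" using idxD[of a] a DK by (auto simp: X_def arrows_def)
        thus ?thesis using False Sec by (simp add: P_def)
      qed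
    qed
    moreover have "P ` units G \<subseteq> units \<Sigma>" using f0u by (auto simp: P_def)
    ultimately show ?thesis unfolding X_def by blast
  qed
qed

end
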